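(* Let $X\subset\operatorname{Hol}(\mathbb{D})$ be a Banach space such that (X1) for each $w\in\mathbb{D}$ the map $f\mapsto f(w)$, $X\to\mathbb{C}$, is continuous; (X2) $X$ contains the polynomials and they are dense in $X$; (X3) if $f\in X$ then $zf\in X$. Let $Y\subset X$ be a set such that (Y1) if $g\in X$ and $0<\inf_{\mathbb{D}}|g|\le\sup_{\mathbb{D}}|g|<\infty$, then $g\in Y$; (Y2) for every $\lambda\in\mathbb{T}$, the function $g(z):=z-\lambda$ belongs to $Y$. Let $\Lambda:X\to\mathbb{C}$ be a continuous linear functional such that $\Lambda(1)=1$ and $\Lambda(g)\neq0$ for all $g\in Y$. Then there exists $w\in\mathbb{D}$ such that \[ \Lambda(f)=f(w)\qquad(f\in X). \]
   Context: $\mathbb{D}$ is the open unit disk, $\mathbb{T}$ the unit circle, and $\operatorname{Hol}(\mathbb{D})$ the space of holomorphic functions on $\mathbb{D}$. *)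

theory Defs
  imports "HOL-Analysis.Analysis" "HOL-Computational_Algebra.Polynomial"
begin

text \<open>Functions on the unit disk are represented as functions on the whole plane
  that vanish outside the open unit disk (canonical representatives).\<close>

definition restrD :: "(complex \<Rightarrow> complex) \<Rightarrow> complex \<Rightarrow> complex" where
  "restrD f = (\<lambda>z. if z \<in> ball 0 1 then f z else 0)"

definition hol_banach_space :: "(complex \<Rightarrow> complex) set \<Rightarrow> ((complex \<Rightarrow> complex) \<Rightarrow> real) \<Rightarrow> bool" where
  "hol_banach_space X N \<longleftrightarrow>
     (\<forall>f\<in>X. f holomorphic_on ball 0 1 \<and> (\<forall>z. z \<notin> ball 0 1 \<longrightarrow> f z = 0)) \<and>
     (\<lambda>z. 0) \<in> X \<and>
     (\<forall>f\<in>X. \<forall>g\<in>X. (\<lambda>z. f z + g z) \<in> X) \<and>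
     (\<forall>c. \<forall>f\<in>X. (\<lambda>z. c * f z) \<in> X) \<and>
     (\<forall>f\<in>X. 0 \<le> N f \<and> (N f = 0 \<longleftrightarrow> f = (\<lambda>z. 0))) \<and>
     (\<forall>c. \<forall>f\<in>X. N (\<lambda>z. c * f z) = cmod c * N f) \<and>
     (\<forall>f\<in>X. \<forall>g\<in>X. N (\<lambda>z. f z + g z) \<le> N f + N g) \<and>
     (\<forall>s. (\<forall>n. s n \<in> X) \<and> (\<forall>e>0. \<exists>M. \<forall>m\<ge>M. \<forall>n\<ge>M. N (\<lambda>z. s m z - s n z) < e)
          \<longrightarrow> (\<exists>f\<in>X. (\<lambda>n. N (\<lambda>z. s n z - f z)) \<longlonglongrightarrow> 0))"

end

theory Submission
  imports Defs "HOL-Computational_Algebra.Fundamental_Theorem_Algebra"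
begin

lemma prod_coeffs:
  fixes rs :: "complex list"
  shows "coeff (\<Prod>r\<leftarrow>rs. [:1, -r:]) 0 = 1 \<and> coeff (\<Prod>r\<leftarrow>rs. [:1, -r:]) 1 = - sum_list rs \<and>
    2 * coeff (\<Prod>r\<leftarrow>rs. [:1, -r:]) 2 = (sum_list rs)^2 - sum_list (map (\<lambda>r. r^2) rs)"
proof (induction rs)
  case Nil
  then show ?case by simp
next
  case (Cons r rs)
  let ?P = "\<Prod>r\<leftarrow>rs. [:1, -r:]"
  have e: "(\<Prod>r\<leftarrow>r#rs. [:1, -r:]) = ?P + pCons 0 (smult (-r) ?P)" by simp
  have c1: "coeff (\<Prod>r\<leftarrow>r#rs. [:1, -r:]) 1 = coeff ?P 1 - r * coeff ?P 0"
    unfolding e by (simp add: numeral_eq_Suc)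
  have c2: "coeff (\<Prod>r\<leftarrow>r#rs. [:1, -r:]) 2 = coeff ?P 2 - r * coeff ?P 1"
    unfolding e by (simp add: numeral_eq_Suc)
  show ?case using Cons c1 c2 unfolding e
    by (auto simp: power2_eq_square algebra_simps)
qed

lemma factor_lemma:
  fixes B :: real
  assumes "B > 0"
  shows "\<forall>Q :: complex poly. degree Q = n \<longrightarrow> poly Q 0 = 1 \<longrightarrow> (\<forall>\<mu>. cmod \<mu> * B < 1 \<longrightarrow> poly Q \<mu> \<noteq> 0) \<longrightarrow>
     (\<exists>rs. Q = (\<Prod>r\<leftarrow>rs. [:1, -r:]) \<and> length rs = n \<and> (\<forall>r\<in>set rs. cmod r \<le> B))"
proof (induction n)
  case 0
  show ?case
  proof (intro allI impI)
    fix Q :: "complex poly" assume "degree Q = 0" "poly Q 0 = 1"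
    then have "Q = 1" using degree_0_id[of Q] by (simp add: poly_0_coeff_0 one_pCons)
    then show "\<exists>rs. Q = (\<Prod>r\<leftarrow>rs. [:1, -r:]) \<and> length rs = 0 \<and> (\<forall>r\<in>set rs. cmod r \<le> B)"
      by (intro exI[of _ "[]"]) simp
  qed
next
  case (Suc n)
  show ?case
  proof (intro allI impI)
    fix Q :: "complex poly" assume dQ: "degree Q = Suc n" and Q0: "poly Q 0 = 1"
      and nz: "\<forall>\<mu>. cmod \<mu> * B < 1 \<longrightarrow> poly Q \<mu> \<noteq> 0"
    have "\<not> constant (poly Q)" using dQ by (simp add: constant_degree)
    then obtain a where a: "poly Q a = 0" using fundamental_theorem_of_algebra by blast
    have a0: "a \<noteq> 0" using a Q0 by auto
    have aB: "cmod a * B \<ge> 1" using nz a by force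
    obtain R where R: "Q = [:-a, 1:] * R" using a poly_eq_0_iff_dvd by (metis dvdE)
    have Rnz: "R \<noteq> 0" using R dQ by auto
    define R' where "R' = smult (-a) R"
    have QR: "Q = [:1, -1/a:] * R'" using R a0 unfolding R'_def
      by (simp add: field_simps)
    have "degree Q = degree [:-a, 1:] + degree R"
      using R Rnz by (metis degree_mult_eq pCons_eq_0_iff one_neq_zero)
    then have dR: "degree R' = n" using dQ a0 unfolding R'_def by simp
    have R0: "poly R' 0 = 1" using Q0 R unfolding R'_def by simp
    have nzR: "\<forall>\<mu>. cmod \<mu> * B < 1 \<longrightarrow> poly R' \<mu> \<noteq> 0" using nz QR by auto
    obtain rs where rs: "R' = (\<Prod>r\<leftarrow>rs. [:1, -r:])" "length rs = n" "\<forall>r\<in>set rs. cmod r \<le> B"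
      using Suc.IH dR R0 nzR by blast
    have "cmod (1/a) \<le> B" using aB a0 \<open>B > 0\<close>
      by (simp add: norm_divide field_simps mult.commute)
    then show "\<exists>rs. Q = (\<Prod>r\<leftarrow>rs. [:1, -r:]) \<and> length rs = Suc n \<and> (\<forall>r\<in>set rs. cmod r \<le> B)"
      using rs QR by (intro exI[of _ "(1/a) # rs"]) auto
  qed
qed

lemma two_choose: "2 * (n choose 2) = n * (n - 1)"
proof (induction n)
  case 0 then show ?case by simp
next
  case (Suc n)
  have "Suc n choose 2 = n + (n choose 2)" by (simp add: numeral_2_eq_2)
  then show ?case using Suc by (cases n) (auto simp: algebra_simps)
qed

lemma sumsq_bound:
  fixes rs :: "complex list"
  assumes "\<forall>r\<in>set rs. cmod r \<le> B"
  shows "cmod (sum_list (map (\<lambda>r. r^2) rs)) \<le> real (length rs) * B^2"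
  using assms
proof (induction rs)
  case Nil then show ?case by simp
next
  case (Cons r rs)
  have "cmod (r^2) \<le> B^2" using Cons.prems by (simp add: norm_power power_mono)
  moreover have "cmod (sum_list (map (\<lambda>r. r^2) (r#rs))) \<le> cmod (r^2) + cmod (sum_list (map (\<lambda>r. r^2) rs))"
    by (simp add: norm_triangle_ineq)
  ultimately show ?case using Cons by (simp add: algebra_simps)
qed

lemma sq_zero:
  fixes L :: "complex poly \<Rightarrow> complex"
  assumes Ladd: "\<And>p q. L (p + q) = L p + L q" and Lsm: "\<And>c p. L (smult c p) = c * L p"
    and L1: "L 1 = 1"
    and spec: "\<And>p \<delta>. \<delta> > 0 \<Longrightarrow> (\<forall>z\<in>ball 0 1. \<delta> \<le> cmod (poly p z)) \<Longrightarrow> L p \<noteq> 0"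
    and Lx: "L x = 0"
  shows "L (x^2) = 0"
proof -
  have L0: "L 0 = 0" using Lsm[of 0 0] by simp
  have Lsum: "L (\<Sum>k\<in>A. f k) = (\<Sum>k\<in>A. L (f k))" if "finite A" for A and f :: "nat \<Rightarrow> complex poly"
    using that by (induction A rule: finite_induct) (auto simp: L0 Ladd)
  have "bounded (poly x ` cball 0 1)"
    by (intro compact_imp_bounded compact_continuous_image continuous_on_poly continuous_on_id compact_cball)
  then obtain B where B: "B > 0" "\<forall>y\<in>poly x ` cball 0 1. norm y \<le> B" using bounded_pos by metis
  have Bx: "cmod (poly x z) \<le> B" if "z \<in> ball 0 1" for z using B(2) that by auto
  let ?m = "L (x^2)"
  have key: "real (n - 1) * cmod ?m \<le> B^2" if n2: "n \<ge> 2" for n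
  proof -
    define Q where "Q = (\<Sum>k\<le>n. monom (of_nat (n choose k) * (-1)^k * L (x^k)) k)"
    have coeffQ: "coeff Q j = (if j \<le> n then of_nat (n choose j) * (-1)^j * L (x^j) else 0)" for j
      unfolding Q_def coeff_sum coeff_monom by auto
    have degQ: "degree Q \<le> n" by (rule degree_le) (simp add: coeffQ)
    have Q0: "poly Q 0 = 1" by (simp add: poly_0_coeff_0 coeffQ L1)
    have polyQ: "poly Q \<mu> = L (\<Sum>k\<le>n. smult (of_nat (n choose k) * (-\<mu>)^k) (x^k))" for \<mu>
      unfolding Q_def poly_sum poly_monom Lsum[OF finite_atMost] Lsm
      by (intro sum.cong refl) (simp add: power_minus[of \<mu>] mult_ac)
    have nz: "poly Q \<mu> \<noteq> 0" if mu: "cmod \<mu> * B < 1" for \<mu>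
    proof -
      have pz: "poly (\<Sum>k\<le>n. smult (of_nat (n choose k) * (-\<mu>)^k) (x^k)) z = (1 - \<mu> * poly x z)^n" for z
      proof -
        have "(1 - \<mu> * poly x z)^n = (-\<mu> * poly x z + 1)^n" by simp
        also have "\<dots> = (\<Sum>k\<le>n. of_nat (n choose k) * (-\<mu> * poly x z)^k * 1^(n-k))"
          by (rule binomial_ring)
        also have "\<dots> = (\<Sum>k\<le>n. of_nat (n choose k) * (-\<mu>)^k * (poly x z)^k)"
          by (intro sum.cong refl) (simp only: power_mult_distrib power_one mult_1_right mult.assoc)
        finally show ?thesis unfolding poly_sum by (simp add: poly_power)
      qed
      have "L (\<Sum>k\<le>n. smult (of_nat (n choose k) * (-\<mu>)^k) (x^k)) \<noteq> 0"
      proof (rule spec[of "(1 - cmod \<mu> * B)^n"])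
        show "(1 - cmod \<mu> * B)^n > 0" using mu by simp
        show "\<forall>z\<in>ball 0 1. (1 - cmod \<mu> * B)^n \<le> cmod (poly (\<Sum>k\<le>n. smult (of_nat (n choose k) * (-\<mu>)^k) (x^k)) z)"
        proof
          fix z :: complex assume z: "z \<in> ball 0 1"
          have "cmod (\<mu> * poly x z) \<le> cmod \<mu> * B"
            unfolding norm_mult using Bx[OF z] by (simp add: mult_left_mono)
          then have "1 - cmod \<mu> * B \<le> cmod (1 - \<mu> * poly x z)"
            using norm_triangle_ineq2[of 1 "\<mu> * poly x z"] by simp
          then have "(1 - cmod \<mu> * B)^n \<le> cmod (1 - \<mu> * poly x z)^n"
            using mu by (intro power_mono) auto
          then show "(1 - cmod \<mu> * B)^n \<le> cmod (poly (\<Sum>k\<le>n. smult (of_nat (n choose k) * (-\<mu>)^k) (x^k)) z)"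
            by (simp add: pz norm_power)
        qed
      qed
      then show ?thesis by (simp add: polyQ)
    qed
    obtain rs where rs: "Q = (\<Prod>r\<leftarrow>rs. [:1, -r:])" "length rs = degree Q" "\<forall>r\<in>set rs. cmod r \<le> B"
      using factor_lemma[OF B(1), of "degree Q"] Q0 nz by blast
    have c1: "coeff Q 1 = 0" using n2 by (simp add: coeffQ Lx)
    have "sum_list rs = 0" using prod_coeffs[of rs] c1 rs(1) by simp
    then have c2: "2 * coeff Q 2 = - sum_list (map (\<lambda>r. r^2) rs)" using prod_coeffs[of rs] rs(1) by simp
    have "2 * coeff Q 2 = of_nat (2 * (n choose 2)) * ?m" using n2 by (simp add: coeffQ)
    also have "\<dots> = of_nat n * of_nat (n - 1) * ?m" by (simp only: two_choose of_nat_mult)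
    finally have e: "of_nat n * of_nat (n - 1) * ?m = - sum_list (map (\<lambda>r. r^2) rs)"
      using c2 by simp
    have "cmod (of_nat n * of_nat (n - 1) * ?m) \<le> real (length rs) * B^2"
      unfolding e norm_minus_cancel by (rule sumsq_bound[OF rs(3)])
    also have "\<dots> \<le> real n * B^2" using rs(2) degQ by (simp add: mult_right_mono)
    finally have "real n * (real (n - 1) * cmod ?m) \<le> real n * B^2"
      by (simp add: norm_mult mult.assoc)
    then show ?thesis using n2 by simp
  qed
  show ?thesis
  proof (rule ccontr)
    assume m: "?m \<noteq> 0"
    obtain n :: nat where n: "B^2 / cmod ?m + 2 < real n" using reals_Archimedean2 by blast
    have "B^2 / cmod ?m \<ge> 0" by simp
    then have "2 < real n" using n by linarith
    then have n2: "n \<ge> 2" by simp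
    have "B^2 / cmod ?m < real (n - 1)" using n n2 by (simp add: of_nat_diff)
    then have "B^2 < real (n - 1) * cmod ?m" using m by (simp add: divide_less_eq)
    with key[OF n2] show False by simp
  qed
qed

lemma mult_lemma:
  fixes L :: "complex poly \<Rightarrow> complex"
  assumes Ladd: "\<And>p q. L (p + q) = L p + L q" and Lsm: "\<And>c p. L (smult c p) = c * L p"
    and L1: "L 1 = 1"
    and sq: "\<And>x. L x = 0 \<Longrightarrow> L (x^2) = 0"
  shows "L (p * q) = L p * L q"
proof -
  have Lminus: "L (p - q) = L p - L q" for p q
  proof -
    have e: "p - q = p + smult (-1) q" by simp
    show ?thesis by (subst e, simp only: Ladd Lsm) simp
  qed
  have Lc: "L [:c:] = c" for c
  proof -
    have e: "[:c:] = smult c 1" by simp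
    show ?thesis unfolding e using Lsm[of c 1] by (simp only: L1 mult_1_right)
  qed
  have sqr: "L (p^2) = (L p)^2" for p
  proof -
    define c where "c = L p"
    have "L (p - [:c:]) = 0" using Lminus Lc c_def by simp
    then have "L ((p - [:c:])^2) = 0" by (rule sq)
    moreover have "(p - [:c:])^2 = p^2 - smult c p - smult c p + [:c^2:]"
      by (simp add: power2_eq_square algebra_simps)
    ultimately have "L (p^2) - c * L p - c * L p + c^2 = 0"
      by (simp only: Ladd Lminus Lc Lsm)
    then have "L (p^2) - 2 * c * c + c^2 = 0" unfolding c_def by (simp add: algebra_simps)
    then show ?thesis unfolding c_def by (simp add: power2_eq_square)
  qed
  have "(p + q)^2 = p^2 + (p * q + p * q) + q^2"
    by (simp add: power2_eq_square algebra_simps)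
  then have "(L p + L q)^2 = (L p)^2 + (L (p * q) + L (p * q)) + (L q)^2"
    using sqr[of "p + q"] by (simp only: Ladd Lsm sqr)
  then show ?thesis by (simp add: power2_eq_square algebra_simps)
qed

lemma eval_lemma:
  fixes L :: "complex poly \<Rightarrow> complex"
  assumes Ladd: "\<And>p q. L (p + q) = L p + L q" and Lsm: "\<And>c p. L (smult c p) = c * L p"
    and L1: "L 1 = 1"
    and mult: "\<And>p q. L (p * q) = L p * L q"
  shows "L p = poly p (L [:0, 1:])"
proof (induction p rule: pCons_induct)
  case 0
  then show ?case using Lsm[of 0 0] by simp
next
  case (pCons a p)
  have e: "pCons a p = smult a 1 + [:0, 1:] * p" by simp
  have "L (pCons a p) = L (smult a 1) + L ([:0, 1:] * p)" by (subst e, rule Ladd)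
  also have "\<dots> = a + L [:0, 1:] * L p" using Lsm[of a 1] mult[of "[:0, 1:]" p] by (simp only: L1 mult_1_right)
  finally show ?case using pCons by simp
qed

theorem theorem7p1:
  fixes X Y :: "(complex \<Rightarrow> complex) set"
    and N :: "(complex \<Rightarrow> complex) \<Rightarrow> real"
    and \<Lambda> :: "(complex \<Rightarrow> complex) \<Rightarrow> complex"
  assumes banach: "hol_banach_space X N"
    and X1: "\<forall>w\<in>ball 0 1. \<exists>C. \<forall>f\<in>X. cmod (f w) \<le> C * N f"
    and X2a: "\<forall>p :: complex poly. restrD (poly p) \<in> X"
    and X2b: "\<forall>f\<in>X. \<forall>e>0. \<exists>p :: complex poly. N (\<lambda>z. f z - restrD (poly p) z) < e"
    and X3: "\<forall>f\<in>X. (\<lambda>z. z * f z) \<in> X"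
    and YX: "Y \<subseteq> X"
    and Y1: "\<forall>g\<in>X. (\<exists>a>0. \<forall>z\<in>ball 0 1. a \<le> cmod (g z)) \<and>
                    (\<exists>b. \<forall>z\<in>ball 0 1. cmod (g z) \<le> b) \<longrightarrow> g \<in> Y"
    and Y2: "\<forall>l. cmod l = 1 \<longrightarrow> restrD (\<lambda>z. z - l) \<in> Y"
    and lin_add: "\<forall>f\<in>X. \<forall>g\<in>X. \<Lambda> (\<lambda>z. f z + g z) = \<Lambda> f + \<Lambda> g"
    and lin_scale: "\<forall>c. \<forall>f\<in>X. \<Lambda> (\<lambda>z. c * f z) = c * \<Lambda> f"
    and cont: "\<exists>C. \<forall>f\<in>X. cmod (\<Lambda> f) \<le> C * N f"
    and one: "\<Lambda> (restrD (\<lambda>z. 1)) = 1"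
    and nonvan: "\<forall>g\<in>Y. \<Lambda> g \<noteq> 0"
  shows "\<exists>w\<in>ball 0 1. \<forall>f\<in>X. \<Lambda> f = f w"
proof -
  note B = banach[unfolded hol_banach_space_def]
  have Xadd: "\<And>f g. f \<in> X \<Longrightarrow> g \<in> X \<Longrightarrow> (\<lambda>z. f z + g z) \<in> X" using B by blast
  have Xsc: "\<And>c f. f \<in> X \<Longrightarrow> (\<lambda>z. c * f z) \<in> X" using B by blast
  define L where "L p = \<Lambda> (restrD (poly p))" for p
  have rP: "restrD (poly p) \<in> X" for p using X2a by blast
  have Ladd: "L (p + q) = L p + L q" for p q
  proof -
    have "restrD (poly (p + q)) = (\<lambda>z. restrD (poly p) z + restrD (poly q) z)"
      by (auto simp: restrD_def)
    then show ?thesis unfolding L_def using lin_add rP by simp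
  qed
  have Lsm: "L (smult c p) = c * L p" for c p
  proof -
    have "restrD (poly (smult c p)) = (\<lambda>z. c * restrD (poly p) z)"
      by (auto simp: restrD_def)
    then show ?thesis unfolding L_def using lin_scale rP by simp
  qed
  have L1: "L 1 = 1"
  proof -
    have "restrD (poly (1::complex poly)) = restrD (\<lambda>z. 1)" unfolding restrD_def by (rule ext) (simp only: poly_1)
    then show ?thesis unfolding L_def using one by simp
  qed
  have spec: "L p \<noteq> 0" if d: "\<delta> > 0" and lb: "\<forall>z\<in>ball 0 1. \<delta> \<le> cmod (poly p z)" for p \<delta>
  proof -
    have "bounded (poly p ` cball 0 1)"
      by (intro compact_imp_bounded compact_continuous_image continuous_on_poly continuous_on_id compact_cball)
    then obtain b where b: "\<forall>y\<in>poly p ` cball 0 1. norm y \<le> b" using bounded_pos by metis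
    have "restrD (poly p) \<in> Y"
    proof (rule Y1[rule_format, OF rP conjI])
      show "\<exists>a>0. \<forall>z\<in>ball 0 1. a \<le> cmod (restrD (poly p) z)"
        using d lb by (intro exI[of _ \<delta>]) (auto simp: restrD_def)
      show "\<exists>b. \<forall>z\<in>ball 0 1. cmod (restrD (poly p) z) \<le> b"
        using b by (intro exI[of _ b]) (auto simp: restrD_def)
    qed
    then show ?thesis unfolding L_def using nonvan by blast
  qed
  have sq: "L (x^2) = 0" if "L x = 0" for x
    by (rule sq_zero[OF Ladd Lsm L1 spec that]) auto
  have mult: "L (p * q) = L p * L q" for p q
    by (rule mult_lemma[OF Ladd Lsm L1 sq])
  define w where "w = L [:0, 1:]"
  have ev: "L p = poly p w" for p unfolding w_def by (rule eval_lemma[OF Ladd Lsm L1 mult])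
  have Lw: "L [:-w, 1:] = 0" using ev by simp
  have rl: "restrD (\<lambda>z. z - l) = restrD (poly [:-l, 1:])" for l unfolding restrD_def by (rule ext) simp
  have w1: "cmod w < 1"
  proof (rule ccontr)
    assume "\<not> cmod w < 1"
    then consider "cmod w = 1" | "cmod w > 1" by linarith
    then show False
    proof cases
      case 1
      then have "restrD (poly [:-w, 1:]) \<in> Y" using Y2 rl by metis
      then show False using nonvan Lw unfolding L_def by blast
    next
      case 2
      have "\<forall>z\<in>ball 0 1. cmod w - 1 \<le> cmod (poly [:-w, 1:] z)"
      proof
        fix z :: complex assume "z \<in> ball 0 1"
        then have "cmod z < 1" by simp
        moreover have "cmod w - cmod z \<le> cmod (z - w)" using norm_triangle_ineq3[of w z] by (simp add: norm_minus_commute)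
        ultimately show "cmod w - 1 \<le> cmod (poly [:-w, 1:] z)" by simp
      qed
      then have "L [:-w, 1:] \<noteq> 0" using 2 by (intro spec[of "cmod w - 1"]) auto
      then show False using Lw by simp
    qed
  qed
  then have wb: "w \<in> ball 0 1" by simp
  obtain C1 where C1: "\<forall>f\<in>X. cmod (\<Lambda> f) \<le> C1 * N f" using cont by blast
  obtain C2 where C2: "\<forall>f\<in>X. cmod (f w) \<le> C2 * N f" using X1 wb by blast
  have Nnn: "\<And>f. f \<in> X \<Longrightarrow> 0 \<le> N f" using B by blast
  show ?thesis
  proof (intro bexI[OF _ wb] ballI)
    fix f assume f: "f \<in> X"
    have bnd: "cmod (\<Lambda> f - f w) \<le> (\<bar>C1\<bar> + \<bar>C2\<bar>) * e" if e: "e > 0" for e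
    proof -
      obtain p where p: "N (\<lambda>z. f z - restrD (poly p) z) < e" using X2b f e by blast
      define g where "g = (\<lambda>z. f z - restrD (poly p) z)"
      have g: "g = (\<lambda>z. f z + (\<lambda>z. (-1) * restrD (poly p) z) z)" unfolding g_def by simp
      have gX: "g \<in> X" unfolding g using Xadd Xsc f rP by blast
      have "\<Lambda> g = \<Lambda> f + \<Lambda> (\<lambda>z. (-1) * restrD (poly p) z)"
        unfolding g by (rule lin_add[rule_format, OF f Xsc[OF rP]])
      also have "\<Lambda> (\<lambda>z. (-1) * restrD (poly p) z) = (-1) * \<Lambda> (restrD (poly p))"
        by (rule lin_scale[rule_format, OF rP])
      finally have Lg: "\<Lambda> g = \<Lambda> f - L p" unfolding L_def by simp
      have gw: "g w = f w - poly p w" using wb unfolding g_def restrD_def by simp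
      have "\<Lambda> f - f w = \<Lambda> g - g w" using Lg gw ev by simp
      then have "cmod (\<Lambda> f - f w) \<le> cmod (\<Lambda> g) + cmod (g w)" by (simp add: norm_triangle_ineq4)
      also have "\<dots> \<le> C1 * N g + C2 * N g" using C1 C2 gX by (simp add: add_mono)
      also have "\<dots> \<le> \<bar>C1\<bar> * N g + \<bar>C2\<bar> * N g" using Nnn[OF gX]
        by (intro add_mono mult_right_mono) auto
      also have "\<dots> = (\<bar>C1\<bar> + \<bar>C2\<bar>) * N g" by (simp add: algebra_simps)
      also have "\<dots> \<le> (\<bar>C1\<bar> + \<bar>C2\<bar>) * e" using p unfolding g_def by (intro mult_left_mono) auto
      finally show ?thesis .
    qed
    show "\<Lambda> f = f w"
    proof (rule ccontr)
      assume ne: "\<Lambda> f \<noteq> f w"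
      define K where "K = \<bar>C1\<bar> + \<bar>C2\<bar> + 1"
      have K: "K > 0" unfolding K_def by simp
      define d where "d = cmod (\<Lambda> f - f w)"
      have d: "d > 0" using ne unfolding d_def by simp
      have dk: "d / (2 * K) > 0" using d K by simp
      have "d \<le> (\<bar>C1\<bar> + \<bar>C2\<bar>) * (d / (2 * K))" using bnd[OF dk] by (simp only: d_def)
      also have "\<dots> \<le> K * (d / (2 * K))" unfolding K_def using d K by (intro mult_right_mono) auto
      also have "\<dots> = d / 2" using K by simp
      finally show False using d by simp
    qed
  qed
qed

end
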